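(* Let $s^1,\ldots,s^k$ be time series with $s^l=(s^l_1,\ldots,s^l_{m_l})\in\mathbb{Q}^{m_l}$. Define \[ U \coloneqq \max_{\substack{I_1,\ldots,I_k\\ I_l=[a_l,b_l],\ 1\le a_l\le b_l\le m_l}} \frac{\sum_{l\in[k]}\sum_{i\in I_l} s^l_i}{\sum_{l\in[k]}|I_l|},\qquad L \coloneqq \min_{\substack{I_1,\ldots,I_k\\ I_l=[a_l,b_l],\ 1\le a_l\le b_l\le m_l}} \frac{\sum_{l\in[k]}\sum_{i\in I_l} s^l_i}{\sum_{l\in[k]}|I_l|}, \] where $[a,b]=\{a,a+1,\ldots,b\}$. Let $z=(z_1,\ldots,z_n)$ be any mean of $s^1,\ldots,s^k$, i.e. a time series minimizing $F(z)=\frac1k\sum_{l=1}^k \mathrm{dtw}(z,s^l)^2$ over all time series. Then $L\le z_j\le U$ for all $j\in[n]$, and for every $l\in[k]$, \[ \mathrm{dtw}(s^l,z)^2\ \ge\ \sum_{i\in[m_l]} \begin{cases} (s^l_i-U)^2 & \text{if } s^l_i>U,\\ (s^l_i-L)^2 & \text{if } s^l_i<L,\\ 0 & \text{otherwise}.\end{cases} \] In particular $F(z)$ is at least $\frac1k$ times the sum over $l\in[k]$ of the right-hand side.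
   Context: A time series is a finite sequence $s=(s_1,\ldots,s_m)\in\mathbb{Q}^m$ for some $m\in\mathbb{N}$; $[m]=\{1,\ldots,m\}$. For $m,n\in\mathbb{N}$, a warping path of order $m\times n$ is a sequence of pairs $(i_1,j_1),\ldots,(i_p,j_p)\in[m]\times[n]$ with $(i_1,j_1)=(1,1)$, $(i_p,j_p)=(m,n)$, and each step $(i_{t+1},j_{t+1})-(i_t,j_t)\in\{(1,0),(0,1),(1,1)\}$. For time series $s\in\mathbb{Q}^m$, $s'\in\mathbb{Q}^n$, the cost of a warping path $P$ is $C_P(s,s')=\sum_{(i,j)\in P}(s_i-s'_j)^2$, and $\mathrm{dtw}(s,s')=\min_P\sqrt{C_P(s,s')}$ over all warping paths of order $m\times n$ (symmetric in the arguments). The Fréchet function of a sample $s^1,\ldots,s^k$ is $F(z)=\frac1k\sum_{l=1}^k\mathrm{dtw}(z,s^l)^2$, defined on all time series $z$ (of any length); a mean is a minimizer of $F$ (one always exists). *)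

theory Defs
  imports Complex_Main
begin

text \<open>Time series are nonempty lists of rationals, indexed 1-based in the paper;
  entry i (1-based) of s is s ! (i - 1).\<close>

definition warping_path :: "nat \<Rightarrow> nat \<Rightarrow> (nat \<times> nat) list \<Rightarrow> bool" where
  "warping_path m n P \<longleftrightarrow>
     P \<noteq> [] \<and> set P \<subseteq> {1..m} \<times> {1..n} \<and>
     hd P = (1, 1) \<and> last P = (m, n) \<and>
     (\<forall>t. Suc t < length P \<longrightarrow>
        (fst (P ! Suc t), snd (P ! Suc t)) \<in>
          {(fst (P ! t) + 1, snd (P ! t)), (fst (P ! t), snd (P ! t) + 1),
           (fst (P ! t) + 1, snd (P ! t) + 1)})"

definition path_cost :: "(nat \<times> nat) list \<Rightarrow> rat list \<Rightarrow> rat list \<Rightarrow> rat" where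
  "path_cost P s s' = (\<Sum>(i, j) \<leftarrow> P. (s ! (i - 1) - s' ! (j - 1))^2)"

definition dtw :: "rat list \<Rightarrow> rat list \<Rightarrow> real" where
  "dtw s s' = sqrt (Min {real_of_rat (path_cost P s s') | P. warping_path (length s) (length s') P})"

definition frechet :: "rat list list \<Rightarrow> rat list \<Rightarrow> real" where
  "frechet S z = (1 / real (length S)) * (\<Sum>l<length S. (dtw z (S ! l))^2)"

definition is_mean :: "rat list list \<Rightarrow> rat list \<Rightarrow> bool" where
  "is_mean S z \<longleftrightarrow> z \<noteq> [] \<and> (\<forall>y. y \<noteq> [] \<longrightarrow> frechet S z \<le> frechet S y)"

definition interval_avg :: "rat list list \<Rightarrow> (nat \<Rightarrow> nat) \<Rightarrow> (nat \<Rightarrow> nat) \<Rightarrow> rat" where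
  "interval_avg S a b =
     (\<Sum>l<length S. \<Sum>i\<in>{a l..b l}. (S ! l) ! (i - 1)) /
     of_nat (\<Sum>l<length S. card {a l..b l})"

definition valid_intervals :: "rat list list \<Rightarrow> (nat \<Rightarrow> nat) \<Rightarrow> (nat \<Rightarrow> nat) \<Rightarrow> bool" where
  "valid_intervals S a b \<longleftrightarrow> (\<forall>l<length S. 1 \<le> a l \<and> a l \<le> b l \<and> b l \<le> length (S ! l))"

definition upperU :: "rat list list \<Rightarrow> rat" where
  "upperU S = Max {interval_avg S a b | a b. valid_intervals S a b}"

definition lowerL :: "rat list list \<Rightarrow> rat" where
  "lowerL S = Min {interval_avg S a b | a b. valid_intervals S a b}"

definition penalty :: "rat \<Rightarrow> rat \<Rightarrow> rat \<Rightarrow> rat" where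
  "penalty U L x = (if x > U then (x - U)^2 else if x < L then (x - L)^2 else 0)"

end

theory Submission imports Defs begin

lemma mono_upto:
  fixes f :: "nat \<Rightarrow> nat"
  assumes "\<forall>t. Suc t < N \<longrightarrow> f t \<le> f (Suc t)" "t1 \<le> t2" "t2 < N"
  shows "f t1 \<le> f t2"
  using assms(2,3)
proof (induction t2)
  case 0 then show ?case by simp
next
  case (Suc t2)
  show ?case
  proof (cases "t1 = Suc t2")
    case True then show ?thesis by simp
  next
    case False
    then have "f t1 \<le> f t2" using Suc by simp
    also have "f t2 \<le> f (Suc t2)" using assms(1) Suc.prems by simp
    finally show ?thesis .
  qed
qed

lemma strict_upto:
  fixes f :: "nat \<Rightarrow> nat"
  assumes "\<forall>t. Suc t < N \<longrightarrow> f t < f (Suc t)" "t1 < t2" "t2 < N"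
  shows "f t1 < f t2"
  using assms(2,3)
proof (induction t2)
  case 0 then show ?case by simp
next
  case (Suc t2)
  have "f t2 < f (Suc t2)" using assms(1) Suc.prems by simp
  show ?case
  proof (cases "t1 = t2")
    case True then show ?thesis using \<open>f t2 < f (Suc t2)\<close> by simp
  next
    case False
    then have "f t1 < f t2" using Suc by simp
    then show ?thesis using \<open>f t2 < f (Suc t2)\<close> by simp
  qed
qed

lemma growth_upto:
  fixes f :: "nat \<Rightarrow> nat"
  assumes "\<forall>t. Suc t < N \<longrightarrow> f t < f (Suc t)" "t < N"
  shows "f 0 + t \<le> f t"
  using assms(2)
proof (induction t)
  case 0 then show ?case by simp
next
  case (Suc t)
  then have "f 0 + t \<le> f t" by simp
  moreover have "f t < f (Suc t)" using assms(1) Suc.prems by simp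
  ultimately show ?case by simp
qed

lemma ivt_upto:
  fixes f :: "nat \<Rightarrow> nat"
  assumes "\<forall>t. Suc t < N \<longrightarrow> f (Suc t) \<le> f t + 1" "t1 \<le> t2" "t2 < N" "f t1 \<le> c" "c \<le> f t2"
  shows "\<exists>t. t1 \<le> t \<and> t \<le> t2 \<and> f t = c"
  using assms(2-5)
proof (induction t2)
  case 0 then show ?case by auto
next
  case (Suc t2)
  show ?case
  proof (cases "t1 = Suc t2")
    case True then show ?thesis using Suc.prems by auto
  next
    case False
    show ?thesis
    proof (cases "c \<le> f t2")
      case True
      then obtain t where "t1 \<le> t \<and> t \<le> t2 \<and> f t = c" using Suc False by auto
      then show ?thesis by (intro exI[of _ t]) auto
    next
      case False
      have "f (Suc t2) \<le> f t2 + 1" using assms(1) Suc.prems by simp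
      then have "f (Suc t2) = c" using False Suc.prems by simp
      then show ?thesis using Suc.prems by auto
    qed
  qed
qed

lemma wp_facts:
  assumes "warping_path m n P"
  shows "P \<noteq> []"
    "\<forall>t<length P. 1 \<le> fst (P!t) \<and> fst (P!t) \<le> m \<and> 1 \<le> snd (P!t) \<and> snd (P!t) \<le> n"
    "P ! 0 = (1,1)" "P ! (length P - 1) = (m, n)"
    "\<forall>t. Suc t < length P \<longrightarrow> fst (P!t) \<le> fst (P!Suc t) \<and> fst (P!Suc t) \<le> fst (P!t) + 1
        \<and> snd (P!t) \<le> snd (P!Suc t) \<and> snd (P!Suc t) \<le> snd (P!t) + 1
        \<and> fst (P!t) + snd (P!t) < fst (P!Suc t) + snd (P!Suc t)"
proof -
  show "P \<noteq> []" using assms unfolding warping_path_def by simp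
  show "\<forall>t<length P. 1 \<le> fst (P!t) \<and> fst (P!t) \<le> m \<and> 1 \<le> snd (P!t) \<and> snd (P!t) \<le> n"
  proof (intro allI impI)
    fix t assume "t < length P"
    then have "P ! t \<in> set P" by simp
    then have "P ! t \<in> {1..m} \<times> {1..n}" using assms unfolding warping_path_def by blast
    then show "1 \<le> fst (P!t) \<and> fst (P!t) \<le> m \<and> 1 \<le> snd (P!t) \<and> snd (P!t) \<le> n" by auto
  qed
  show "P ! 0 = (1,1)" using assms unfolding warping_path_def by (metis hd_conv_nth)
  show "P ! (length P - 1) = (m, n)" using assms unfolding warping_path_def by (metis last_conv_nth)
  show "\<forall>t. Suc t < length P \<longrightarrow> fst (P!t) \<le> fst (P!Suc t) \<and> fst (P!Suc t) \<le> fst (P!t) + 1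
        \<and> snd (P!t) \<le> snd (P!Suc t) \<and> snd (P!Suc t) \<le> snd (P!t) + 1
        \<and> fst (P!t) + snd (P!t) < fst (P!Suc t) + snd (P!Suc t)"
  proof (intro allI impI)
    fix t assume "Suc t < length P"
    then have "(fst (P ! Suc t), snd (P ! Suc t)) \<in>
          {(fst (P ! t) + 1, snd (P ! t)), (fst (P ! t), snd (P ! t) + 1),
           (fst (P ! t) + 1, snd (P ! t) + 1)}" using assms unfolding warping_path_def by blast
    then show "fst (P!t) \<le> fst (P!Suc t) \<and> fst (P!Suc t) \<le> fst (P!t) + 1
        \<and> snd (P!t) \<le> snd (P!Suc t) \<and> snd (P!Suc t) \<le> snd (P!t) + 1
        \<and> fst (P!t) + snd (P!t) < fst (P!Suc t) + snd (P!Suc t)" by auto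
  qed
qed

lemma wp_distinct:
  assumes "warping_path m n P" shows "distinct P"
proof -
  note F = wp_facts[OF assms]
  have st: "\<forall>t. Suc t < length P \<longrightarrow> (\<lambda>t. fst (P!t) + snd (P!t)) t < (\<lambda>t. fst (P!t) + snd (P!t)) (Suc t)"
    using F(5) by auto
  show ?thesis unfolding distinct_conv_nth
  proof (intro allI impI)
    fix i j assume ij: "i < length P" "j < length P" "i \<noteq> j"
    show "P ! i \<noteq> P ! j"
    proof (cases "i < j")
      case True
      have "fst (P!i) + snd (P!i) < fst (P!j) + snd (P!j)" using strict_upto[OF st True ij(2)] by simp
      then show ?thesis by auto
    next
      case False
      then have "j < i" using ij by simp
      have "fst (P!j) + snd (P!j) < fst (P!i) + snd (P!i)" using strict_upto[OF st \<open>j < i\<close> ij(1)] by simp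
      then show ?thesis by auto
    qed
  qed
qed

lemma wp_len:
  assumes "warping_path m n P" shows "length P \<le> m + n"
proof -
  note F = wp_facts[OF assms]
  have st: "\<forall>t. Suc t < length P \<longrightarrow> (\<lambda>t. fst (P!t) + snd (P!t)) t < (\<lambda>t. fst (P!t) + snd (P!t)) (Suc t)"
    using F(5) by auto
  have "length P - 1 < length P" using F(1) by simp
  from growth_upto[OF st this] F(3,4) show ?thesis by simp
qed

lemma wp_finite: "finite {P. warping_path m n P}"
proof -
  have "{P. warping_path m n P} \<subseteq> {xs. set xs \<subseteq> {1..m} \<times> {1..n} \<and> length xs \<le> m + n}"
    using wp_len unfolding warping_path_def by auto
  moreover have "finite {xs. set xs \<subseteq> {1..m} \<times> {1..n} \<and> length xs \<le> m + n}"
    by (rule finite_lists_length_le) simp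
  ultimately show ?thesis by (rule finite_subset)
qed

lemma wp_exists:
  assumes "1 \<le> m" "1 \<le> n"
  shows "\<exists>P. warping_path m n P"
proof -
  define \<phi> where "\<phi> t = (min (t+1) m, max 1 (t+2-m))" for t :: nat
  define P where "P = map \<phi> [0..<m+n-1]"
  have len: "length P = m+n-1" by (simp add: P_def)
  have nth: "P ! t = \<phi> t" if "t < m+n-1" for t using that by (simp add: P_def)
  have "P \<noteq> []" using assms len by auto
  moreover have "set P \<subseteq> {1..m} \<times> {1..n}" using assms by (auto simp: P_def \<phi>_def)
  moreover have "hd P = (1,1)" using assms \<open>P \<noteq> []\<close> len by (simp add: hd_conv_nth nth \<phi>_def)
  moreover have "last P = (m,n)" using assms \<open>P \<noteq> []\<close> len by (simp add: last_conv_nth nth \<phi>_def)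
  moreover have "\<forall>t. Suc t < length P \<longrightarrow>
        (fst (P ! Suc t), snd (P ! Suc t)) \<in>
          {(fst (P ! t) + 1, snd (P ! t)), (fst (P ! t), snd (P ! t) + 1),
           (fst (P ! t) + 1, snd (P ! t) + 1)}"
  proof (intro allI impI)
    fix t assume t: "Suc t < length P"
    show "(fst (P ! Suc t), snd (P ! Suc t)) \<in>
          {(fst (P ! t) + 1, snd (P ! t)), (fst (P ! t), snd (P ! t) + 1),
           (fst (P ! t) + 1, snd (P ! t) + 1)}"
      using t len by (cases "t + 1 < m") (auto simp: nth \<phi>_def)
  qed
  ultimately show ?thesis unfolding warping_path_def by blast
qed

lemma wp_cover_fst:
  assumes wp: "warping_path m n P" and i: "1 \<le> i" "i \<le> m"
  shows "\<exists>j. (i, j) \<in> set P"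
proof -
  note F = wp_facts[OF wp]
  have st: "\<forall>t. Suc t < length P \<longrightarrow> (\<lambda>t. fst (P!t)) (Suc t) \<le> (\<lambda>t. fst (P!t)) t + 1"
    using F(5) by auto
  obtain t where t: "t \<le> length P - 1" "fst (P!t) = i"
    using ivt_upto[OF st, of 0 "length P - 1" i] F(1,3,4) i by auto
  have "length P > 0" using F(1) by simp
  then have "t < length P" using t(1) by linarith
  then have "P ! t \<in> set P" by simp
  then show ?thesis using t by (metis prod.collapse)
qed

lemma wp_cover_snd:
  assumes wp: "warping_path m n P" and i: "1 \<le> i" "i \<le> n"
  shows "\<exists>j. (j, i) \<in> set P"
proof -
  note F = wp_facts[OF wp]
  have st: "\<forall>t. Suc t < length P \<longrightarrow> (\<lambda>t. snd (P!t)) (Suc t) \<le> (\<lambda>t. snd (P!t)) t + 1"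
    using F(5) by auto
  obtain t where t: "t \<le> length P - 1" "snd (P!t) = i"
    using ivt_upto[OF st, of 0 "length P - 1" i] F(1,3,4) i by auto
  have "length P > 0" using F(1) by simp
  then have "t < length P" using t(1) by linarith
  then have "P ! t \<in> set P" by simp
  then show ?thesis using t by (metis prod.collapse)
qed

lemma wp_convex:
  assumes wp: "warping_path m n P" and A: "(J, x) \<in> set P" and B: "(J, y) \<in> set P"
    and "x \<le> c" "c \<le> y"
  shows "(J, c) \<in> set P"
proof -
  note F = wp_facts[OF wp]
  obtain t1 where t1: "t1 < length P" "P ! t1 = (J, x)" using A by (auto simp: in_set_conv_nth)
  obtain t2 where t2: "t2 < length P" "P ! t2 = (J, y)" using B by (auto simp: in_set_conv_nth)
  have ms: "\<forall>t. Suc t < length P \<longrightarrow> (\<lambda>t. snd (P!t)) t \<le> (\<lambda>t. snd (P!t)) (Suc t)"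
    using F(5) by auto
  have mf: "\<forall>t. Suc t < length P \<longrightarrow> (\<lambda>t. fst (P!t)) t \<le> (\<lambda>t. fst (P!t)) (Suc t)"
    using F(5) by auto
  have sndstep: "\<forall>t. Suc t < length P \<longrightarrow> (\<lambda>t. snd (P!t)) (Suc t) \<le> (\<lambda>t. snd (P!t)) t + 1"
    using F(5) by auto
  show ?thesis
  proof (cases "x = c \<or> y = c")
    case True then show ?thesis using A B by auto
  next
    case False
    then have xc: "x < c" "c < y" using assms by auto
    have "t1 < t2"
    proof (rule ccontr)
      assume "\<not> t1 < t2"
      then have "snd (P!t2) \<le> snd (P!t1)" using mono_upto[OF ms, of t2 t1] t1 by auto
      then show False using t1 t2 xc by simp
    qed
    obtain t where t: "t1 \<le> t" "t \<le> t2" "snd (P!t) = c"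
      using ivt_upto[OF sndstep, of t1 t2 c] \<open>t1<t2\<close> t1 t2 xc by auto
    have "fst (P!t1) \<le> fst (P!t)" using mono_upto[OF mf, of t1 t] t t2 by auto
    moreover have "fst (P!t) \<le> fst (P!t2)" using mono_upto[OF mf, of t t2] t t2 by auto
    ultimately have "fst (P!t) = J" using t1 t2 by simp
    then have "P!t = (J,c)" using t by (metis prod.collapse)
    moreover have "t < length P" using t t2 by simp
    ultimately show ?thesis by (metis nth_mem)
  qed
qed


lemma path_cost_set:
  assumes "warping_path m n P"
  shows "path_cost P s s' = (\<Sum>p\<in>set P. (s ! (fst p - 1) - s' ! (snd p - 1))^2)"
  unfolding path_cost_def using wp_distinct[OF assms]
  by (simp add: sum_list_distinct_conv_sum_set case_prod_beta)

lemma path_cost_nonneg: "0 \<le> path_cost P s s'"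
  unfolding path_cost_def by (rule sum_list_nonneg) auto

lemma dtw_facts:
  assumes "s \<noteq> []" "s' \<noteq> []"
  shows "\<exists>P. warping_path (length s) (length s') P \<and> (dtw s s')^2 = real_of_rat (path_cost P s s')"
    "\<And>P. warping_path (length s) (length s') P \<Longrightarrow> (dtw s s')^2 \<le> real_of_rat (path_cost P s s')"
proof -
  define C where "C = {real_of_rat (path_cost P s s') | P. warping_path (length s) (length s') P}"
  have C_img: "C = (\<lambda>P. real_of_rat (path_cost P s s')) ` {P. warping_path (length s) (length s') P}"
    unfolding C_def by auto
  have fin: "finite C" unfolding C_img by (rule finite_imageI[OF wp_finite])
  obtain P0 where "warping_path (length s) (length s') P0"
    using wp_exists[of "length s" "length s'"] assms by (auto simp: Suc_le_eq)
  then have ne: "C \<noteq> {}" unfolding C_def by auto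
  have nn: "0 \<le> Min C" using fin ne unfolding C_def by (auto simp: path_cost_nonneg)
  have sq: "(dtw s s')^2 = Min C" unfolding dtw_def C_def[symmetric] using nn by simp
  show "\<exists>P. warping_path (length s) (length s') P \<and> (dtw s s')^2 = real_of_rat (path_cost P s s')"
    using Min_in[OF fin ne] sq unfolding C_def by auto
  fix P assume "warping_path (length s) (length s') P"
  then have "real_of_rat (path_cost P s s') \<in> C" unfolding C_def by auto
  then show "(dtw s s')^2 \<le> real_of_rat (path_cost P s s')" using sq Min_le[OF fin] by simp
qed

lemma penalty_le:
  assumes "L \<le> y" "y \<le> U"
  shows "penalty U L x \<le> (x - y)^2"
proof (cases "x > U")
  case True
  then have "(x - U)^2 \<le> (x - y)^2" using assms by (intro power_mono) auto
  then show ?thesis using True by (simp add: penalty_def)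
next
  case False
  show ?thesis
  proof (cases "x < L")
    case True
    then have "(L - x)^2 \<le> (y - x)^2" using assms by (intro power_mono) auto
    then show ?thesis using True False by (simp add: penalty_def power2_commute)
  next
    case False2: False
    then show ?thesis using False by (simp add: penalty_def)
  qed
qed

lemma penalty_nonneg: "0 \<le> penalty U L x"
  by (simp add: penalty_def)

lemma shift_sum:
  fixes g :: "nat \<Rightarrow> rat" and m :: nat
  shows "(\<Sum>i\<in>{1..m}. g (i - 1)) = (\<Sum>i<m. g i)"
  by (induction m) (auto simp: sum.cl_ivl_Suc)

lemma sum_fst_ge:
  assumes wp: "warping_path m n P" and nn: "\<And>i. 0 \<le> g i"
  shows "(\<Sum>i<m. g i) \<le> (\<Sum>p\<in>set P. (g (fst p - 1) :: rat))"
proof -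
  have img: "fst ` set P = {1..m}"
  proof
    show "fst ` set P \<subseteq> {1..m}" using wp unfolding warping_path_def by auto
    show "{1..m} \<subseteq> fst ` set P"
    proof
      fix i assume "i \<in> {1..m}"
      then obtain j where "(i,j) \<in> set P" using wp_cover_fst[OF wp] by auto
      then show "i \<in> fst ` set P" by force
    qed
  qed
  have "(\<Sum>i<m. g i) = (\<Sum>i\<in>fst ` set P. g (i - 1))" using img shift_sum[of g m] by simp
  also have "\<dots> \<le> (\<Sum>p\<in>set P. g (fst p - 1))"
    using sum_image_le[of "set P" "\<lambda>i. g (i - 1)" fst] nn by (simp add: o_def)
  finally show ?thesis .
qed

lemma sum_snd_ge:
  assumes wp: "warping_path m n P" and nn: "\<And>i. 0 \<le> g i"
  shows "(\<Sum>i<n. g i) \<le> (\<Sum>p\<in>set P. (g (snd p - 1) :: rat))"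
proof -
  have img: "snd ` set P = {1..n}"
  proof
    show "snd ` set P \<subseteq> {1..n}" using wp unfolding warping_path_def by auto
    show "{1..n} \<subseteq> snd ` set P"
    proof
      fix i assume "i \<in> {1..n}"
      then obtain j where "(j,i) \<in> set P" using wp_cover_snd[OF wp] by auto
      then show "i \<in> snd ` set P" by force
    qed
  qed
  have "(\<Sum>i<n. g i) = (\<Sum>i\<in>snd ` set P. g (i - 1))" using img shift_sum[of g n] by simp
  also have "\<dots> \<le> (\<Sum>p\<in>set P. g (snd p - 1))"
    using sum_image_le[of "set P" "\<lambda>i. g (i - 1)" snd] nn by (simp add: o_def)
  finally show ?thesis .
qed

lemma part2:
  assumes "s \<noteq> []" "z \<noteq> []" and bnd: "\<forall>j<length z. L \<le> z ! j \<and> z ! j \<le> U"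
  shows "(dtw s z)^2 \<ge> real_of_rat (\<Sum>i<length s. penalty U L (s ! i))"
    "(dtw z s)^2 \<ge> real_of_rat (\<Sum>i<length s. penalty U L (s ! i))"
proof -
  obtain P where P: "warping_path (length s) (length z) P" "(dtw s z)^2 = real_of_rat (path_cost P s z)"
    using dtw_facts(1)[OF assms(1,2)] by blast
  have "(\<Sum>i<length s. penalty U L (s ! i)) \<le> (\<Sum>p\<in>set P. penalty U L (s ! (fst p - 1)))"
    using sum_fst_ge[OF P(1), of "\<lambda>i. penalty U L (s ! i)"] penalty_nonneg by blast
  also have "\<dots> \<le> (\<Sum>p\<in>set P. (s ! (fst p - 1) - z ! (snd p - 1))^2)"
  proof (rule sum_mono)
    fix p assume "p \<in> set P"
    then have "1 \<le> snd p" "snd p \<le> length z" using P(1) unfolding warping_path_def by auto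
    then have "snd p - 1 < length z" by simp
    then show "penalty U L (s ! (fst p - 1)) \<le> (s ! (fst p - 1) - z ! (snd p - 1))^2"
      using bnd penalty_le by blast
  qed
  also have "\<dots> = path_cost P s z" using path_cost_set[OF P(1)] by simp
  finally show "(dtw s z)^2 \<ge> real_of_rat (\<Sum>i<length s. penalty U L (s ! i))"
    using P(2) of_rat_less_eq by metis
next
  obtain P where P: "warping_path (length z) (length s) P" "(dtw z s)^2 = real_of_rat (path_cost P z s)"
    using dtw_facts(1)[OF assms(2,1)] by blast
  have "(\<Sum>i<length s. penalty U L (s ! i)) \<le> (\<Sum>p\<in>set P. penalty U L (s ! (snd p - 1)))"
    using sum_snd_ge[OF P(1), of "\<lambda>i. penalty U L (s ! i)"] penalty_nonneg by blast
  also have "\<dots> \<le> (\<Sum>p\<in>set P. (z ! (fst p - 1) - s ! (snd p - 1))^2)"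
  proof (rule sum_mono)
    fix p assume "p \<in> set P"
    then have "1 \<le> fst p" "fst p \<le> length z" using P(1) unfolding warping_path_def by auto
    then have "fst p - 1 < length z" by simp
    then show "penalty U L (s ! (snd p - 1)) \<le> (z ! (fst p - 1) - s ! (snd p - 1))^2"
      using bnd penalty_le by (metis power2_commute)
  qed
  also have "\<dots> = path_cost P z s" using path_cost_set[OF P(1)] by simp
  finally show "(dtw z s)^2 \<ge> real_of_rat (\<Sum>i<length s. penalty U L (s ! i))"
    using P(2) of_rat_less_eq by metis
qed


lemma avg_set_finite:
  "finite {interval_avg S a b | a b. valid_intervals S a b}"
proof -
  define k where "k = length S"
  define B where "B = sum_list (map length S)"
  define X where "X = {xs. set xs \<subseteq> {0..B} \<and> length xs = k}"
  define g where "g = (\<lambda>(xs, ys). interval_avg S (\<lambda>l. xs ! l) (\<lambda>l. ys ! l))"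
  have "{interval_avg S a b | a b. valid_intervals S a b} \<subseteq> g ` (X \<times> X)"
  proof
    fix v assume "v \<in> {interval_avg S a b | a b. valid_intervals S a b}"
    then obtain a b where v: "v = interval_avg S a b" and val: "valid_intervals S a b" by blast
    have le: "length (S ! l) \<le> B" if "l < k" for l
      using elem_le_sum_list[of l "map length S"] that unfolding B_def k_def by simp
    have ab: "a l \<le> B \<and> b l \<le> B" if "l < k" for l
      using val le[OF that] that unfolding valid_intervals_def k_def by fastforce
    have "map a [0..<k] \<in> X" "map b [0..<k] \<in> X"
      unfolding X_def using ab by auto
    moreover have "v = g (map a [0..<k], map b [0..<k])"
      unfolding v g_def interval_avg_def k_def by simp
    ultimately show "v \<in> g ` (X \<times> X)" by blast
  qed
  moreover have "finite X" unfolding X_def by (rule finite_lists_length_eq) simp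
  then have "finite (g ` (X \<times> X))" by simp
  ultimately show ?thesis by (rule finite_subset)
qed

lemma part1:
  assumes S: "S \<noteq> []" and ne: "\<forall>l<length S. S ! l \<noteq> []" and mean: "is_mean S z"
    and j: "j < length z"
  shows "lowerL S \<le> z ! j \<and> z ! j \<le> upperU S"
proof -
  define k where "k = length S"
  define n where "n = length z"
  have zne: "z \<noteq> []" using mean unfolding is_mean_def by simp
  have "\<forall>l<k. \<exists>P. warping_path n (length (S!l)) P \<and> (dtw z (S!l))^2 = real_of_rat (path_cost P z (S!l))"
    using dtw_facts(1) zne ne unfolding k_def n_def by blast
  then obtain PP where PP: "\<And>l. l<k \<Longrightarrow> warping_path n (length (S!l)) (PP l)"
     "\<And>l. l < k \<Longrightarrow> (dtw z (S!l))^2 = real_of_rat (path_cost (PP l) z (S!l))"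
    by metis
  define J where "J = Suc j"
  define T where "T l = {i. (J, i) \<in> set (PP l)}" for l
  define a where "a l = Min (T l)" for l
  define b where "b l = Max (T l)" for l
  have Tprops: "T l = {a l..b l} \<and> 1 \<le> a l \<and> a l \<le> b l \<and> b l \<le> length (S!l)" if l: "l < k" for l
  proof -
    have wp: "warping_path n (length (S!l)) (PP l)" using PP(1) l .
    have sub: "T l \<subseteq> {1..length (S!l)}" using wp unfolding warping_path_def T_def by auto
    then have fin: "finite (T l)" using finite_subset by blast
    have "1 \<le> J" "J \<le> n" using j unfolding J_def n_def by auto
    then obtain i where "(J, i) \<in> set (PP l)" using wp_cover_fst[OF wp] by blast
    then have tne: "T l \<noteq> {}" unfolding T_def by auto
    have ain: "a l \<in> T l" using Min_in[OF fin tne] unfolding a_def .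
    have bin: "b l \<in> T l" using Max_in[OF fin tne] unfolding b_def .
    have "T l = {a l..b l}"
    proof
      show "T l \<subseteq> {a l..b l}" using fin unfolding a_def b_def by auto
      show "{a l..b l} \<subseteq> T l"
      proof
        fix c assume "c \<in> {a l..b l}"
        then show "c \<in> T l" using wp_convex[OF wp, of J "a l" "b l" c] ain bin unfolding T_def by auto
      qed
    qed
    moreover have "a l \<le> b l" using ain fin unfolding b_def by auto
    ultimately show ?thesis using ain bin sub by auto
  qed
  define N where "N = (\<Sum>l<k. card {a l..b l})"
  define Ssum where "Ssum = (\<Sum>l<k. \<Sum>i\<in>{a l..b l}. (S ! l) ! (i - 1))"
  define c where "c = Ssum / of_nat N"
  have avg: "interval_avg S a b = c" unfolding interval_avg_def c_def Ssum_def N_def k_def ..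
  have valid: "valid_intervals S a b" unfolding valid_intervals_def using Tprops k_def by auto
  have "0 < k" using S k_def by simp
  then have "0 < card {a 0..b 0}" using Tprops[of 0] by simp
  moreover have "card {a 0..b 0} \<le> N" unfolding N_def
    by (rule member_le_sum) (use \<open>0 < k\<close> in auto)
  ultimately have Npos: "0 < N" by linarith
  define zj where "zj = z ! j"
  define z' where "z' = z[j := c]"
  define \<delta> where "\<delta> l i = (c - S!l!(i-1))^2 - (zj - S!l!(i-1))^2" for l i
  have decomp: "path_cost (PP l) z' (S!l) = path_cost (PP l) z (S!l) + (\<Sum>i\<in>{a l..b l}. \<delta> l i)"
    if l: "l < k" for l
  proof -
    have wp: "warping_path n (length (S!l)) (PP l)" using PP(1) l .
    have wp': "warping_path (length z') (length (S!l)) (PP l)" using wp unfolding z'_def n_def by simp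
    have "path_cost (PP l) z' (S!l) = (\<Sum>p\<in>set (PP l). (z' ! (fst p - 1) - S!l ! (snd p - 1))^2)"
      using path_cost_set[OF wp'] .
    also have "\<dots> = (\<Sum>p\<in>set (PP l). (z ! (fst p - 1) - S!l ! (snd p - 1))^2
          + (if fst p = J then \<delta> l (snd p) else 0))"
    proof (rule sum.cong[OF refl])
      fix p assume "p \<in> set (PP l)"
      then have "1 \<le> fst p" "fst p \<le> n" using wp unfolding warping_path_def by auto
      then have "fst p - 1 < length z" "(fst p - 1 = j) = (fst p = J)" unfolding n_def J_def by auto
      then show "(z' ! (fst p - 1) - S!l ! (snd p - 1))^2 = (z ! (fst p - 1) - S!l ! (snd p - 1))^2
          + (if fst p = J then \<delta> l (snd p) else 0)"
        unfolding z'_def \<delta>_def zj_def by (auto simp: nth_list_update)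
    qed
    also have "\<dots> = path_cost (PP l) z (S!l) + (\<Sum>p\<in>set (PP l). if fst p = J then \<delta> l (snd p) else 0)"
      using path_cost_set[OF wp] by (simp add: sum.distrib)
    also have "(\<Sum>p\<in>set (PP l). if fst p = J then \<delta> l (snd p) else 0)
        = (\<Sum>p\<in>{p \<in> set (PP l). fst p = J}. \<delta> l (snd p))"
      by (simp add: sum.inter_filter)
    also have "{p \<in> set (PP l). fst p = J} = Pair J ` T l" unfolding T_def by force
    also have "(\<Sum>p\<in>Pair J ` T l. \<delta> l (snd p)) = (\<Sum>i\<in>T l. \<delta> l i)"
      by (subst sum.reindex) (auto simp: inj_on_def)
    finally show ?thesis using Tprops[OF l] by simp
  qed
  have dsum: "(\<Sum>l<k. \<Sum>i\<in>{a l..b l}. \<delta> l i) = - of_nat N * (c - zj)^2"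
  proof -
    have e: "\<delta> l i = (c^2 - zj^2) - 2 * (c - zj) * (S!l!(i-1))" for l i
      unfolding \<delta>_def by (simp add: power2_eq_square algebra_simps)
    have "(\<Sum>l<k. \<Sum>i\<in>{a l..b l}. \<delta> l i)
        = (\<Sum>l<k. \<Sum>i\<in>{a l..b l}. (c^2 - zj^2) - 2 * (c - zj) * (S!l!(i-1)))"
      by (simp add: e)
    also have "\<dots> = (\<Sum>l<k. of_nat (card {a l..b l}) * (c^2 - zj^2) - 2 * (c - zj) * (\<Sum>i\<in>{a l..b l}. S!l!(i-1)))"
      by (simp add: sum_subtractf sum_distrib_left)
    also have "\<dots> = of_nat N * (c^2 - zj^2) - 2 * (c - zj) * Ssum"
      unfolding N_def Ssum_def by (simp add: sum_subtractf sum_distrib_left sum_distrib_right)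
    also have "Ssum = c * of_nat N" unfolding c_def using Npos by simp
    finally show ?thesis by (simp add: power2_eq_square algebra_simps)
  qed
  have costs: "(\<Sum>l<k. real_of_rat (path_cost (PP l) z' (S!l)))
      = (\<Sum>l<k. real_of_rat (path_cost (PP l) z (S!l))) - real_of_rat (of_nat N * (c - zj)^2)"
  proof -
    have "(\<Sum>l<k. real_of_rat (path_cost (PP l) z' (S!l)))
        = (\<Sum>l<k. real_of_rat (path_cost (PP l) z (S!l)) + real_of_rat (\<Sum>i\<in>{a l..b l}. \<delta> l i))"
      by (rule sum.cong[OF refl]) (simp add: decomp of_rat_add)
    also have "\<dots> = (\<Sum>l<k. real_of_rat (path_cost (PP l) z (S!l))) + real_of_rat (\<Sum>l<k. \<Sum>i\<in>{a l..b l}. \<delta> l i)"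
      by (simp add: sum.distrib of_rat_sum)
    finally show ?thesis unfolding dsum by (simp add: of_rat_minus)
  qed
  have z'ne: "z' \<noteq> []" using zne unfolding z'_def by simp
  have "frechet S z \<le> frechet S z'" using mean z'ne unfolding is_mean_def by blast
  also have "frechet S z' \<le> (1 / real k) * (\<Sum>l<k. real_of_rat (path_cost (PP l) z' (S!l)))"
    unfolding frechet_def k_def[symmetric]
  proof (intro mult_left_mono sum_mono)
    fix l assume "l \<in> {..<k}"
    then have l: "l < k" by simp
    have "warping_path (length z') (length (S!l)) (PP l)" using PP(1)[OF l] unfolding z'_def n_def by simp
    then show "(dtw z' (S!l))^2 \<le> real_of_rat (path_cost (PP l) z' (S!l))"
      using dtw_facts(2)[OF z'ne] ne l unfolding k_def by blast
  qed simp
  also have "frechet S z = (1 / real k) * (\<Sum>l<k. real_of_rat (path_cost (PP l) z (S!l)))"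
    unfolding frechet_def k_def[symmetric] using PP(2) by simp
  finally have "real_of_rat (of_nat N * (c - zj)^2) \<le> 0"
    unfolding costs using \<open>0 < k\<close> by (simp add: field_simps)
  then have "of_nat N * (c - zj)^2 \<le> 0" by (metis of_rat_0 of_rat_less_eq)
  then have "c = zj" using Npos
    by (metis mult_le_0_iff not_less of_nat_0_less_iff power2_less_eq_zero_iff eq_iff_diff_eq_0 zero_less_power2 nle_le)
  have cin: "c \<in> {interval_avg S a b | a b. valid_intervals S a b}" unfolding avg[symmetric] using valid by blast
  show ?thesis unfolding lowerL_def upperU_def
    using Min_le[OF avg_set_finite cin] Max_ge[OF avg_set_finite cin] \<open>c = zj\<close> zj_def by simp
qed

theorem mainTheorem1:
  fixes S :: "rat list list" and z :: "rat list"
  assumes "S \<noteq> []"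
    and "\<forall>l<length S. S ! l \<noteq> []"
    and "is_mean S z"
  shows "(\<forall>j<length z. lowerL S \<le> z ! j \<and> z ! j \<le> upperU S)
    \<and> (\<forall>l<length S. (dtw (S ! l) z)^2 \<ge>
          real_of_rat (\<Sum>i<length (S ! l). penalty (upperU S) (lowerL S) ((S ! l) ! i)))
    \<and> frechet S z \<ge> (1 / real (length S)) *
          (\<Sum>l<length S. real_of_rat
             (\<Sum>i<length (S ! l). penalty (upperU S) (lowerL S) ((S ! l) ! i)))"
proof -
  have b: "\<forall>j<length z. lowerL S \<le> z ! j \<and> z ! j \<le> upperU S" using part1[OF assms] by blast
  have zne: "z \<noteq> []" using assms(3) unfolding is_mean_def by simp
  have p2: "\<forall>l<length S. (dtw (S ! l) z)^2 \<ge>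
          real_of_rat (\<Sum>i<length (S ! l). penalty (upperU S) (lowerL S) ((S ! l) ! i))"
    using part2(1)[OF _ zne b] assms(2) by blast
  have "(\<Sum>l<length S. real_of_rat
             (\<Sum>i<length (S ! l). penalty (upperU S) (lowerL S) ((S ! l) ! i)))
       \<le> (\<Sum>l<length S. (dtw z (S ! l))^2)"
    using part2(2)[OF _ zne b] assms(2) by (intro sum_mono) blast
  then have "frechet S z \<ge> (1 / real (length S)) *
          (\<Sum>l<length S. real_of_rat
             (\<Sum>i<length (S ! l). penalty (upperU S) (lowerL S) ((S ! l) ! i)))"
    unfolding frechet_def by (intro mult_left_mono) auto
  then show ?thesis using b p2 by blast
qed

end
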